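(* Let $L>0$ and consider the fourth-order ODE $$\tfrac12\,\theta=\theta^2\bigl(-\theta^{(4)}+\theta\bigr).$$ (i) There is no function $\theta\in C^4([-L,L])$, $\theta\not\equiv 0$, satisfying this ODE on $(-L,L)$ together with the boundary conditions $\theta(\pm L)=\theta'(\pm L)=0$. (ii) There is no function $\theta\in C^4(\mathbb{R})$, $\theta\not\equiv 0$, with $\theta,\theta',\theta'',\theta'''$ bounded on $\mathbb{R}$, satisfying this ODE on $\mathbb{R}$ together with $\theta(x)\to0$ as $x\to\pm\infty$.
   Context: This ODE is the profile equation for separable blow-up solutions $u(x,t)=(T-t)^{-1/2}\theta(x)$ of $u_t=u^2(-u_{xxxx}+u)$. For a solution that does not vanish, dividing by $\theta^2$, multiplying by $\theta'$ and integrating gives the first integral $\tfrac12\ln|\theta|=-\theta'''\theta+\tfrac12(\theta'')^2+\tfrac12\theta^2+C$ with a constant $C\in\mathbb{R}$. *)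

theory Defs
  imports "HOL-Analysis.Analysis"
begin

text \<open>d is the list of derivatives of f up to order 4 on S, with one-sided
  derivatives at boundary points (derivative taken within S), and the
  fourth derivative continuous on S. "f is C^4 on S" is "exists d. C4_derivs S f d".\<close>
definition C4_derivs :: "real set \<Rightarrow> (real \<Rightarrow> real) \<Rightarrow> (nat \<Rightarrow> real \<Rightarrow> real) \<Rightarrow> bool" where
  "C4_derivs S f d \<longleftrightarrow> d 0 = f \<and>
     (\<forall>k<4. \<forall>x\<in>S. (d k has_real_derivative d (Suc k) x) (at x within S)) \<and>
     continuous_on S (d 4)"

end

theory Submission
  imports Defs
begin

lemma deriv_cont:
  assumes "\<forall>x\<in>S. (f has_real_derivative f' x) (at x within S)"
  shows "continuous_on S f"
  unfolding continuous_on_eq_continuous_within using assms DERIV_continuous by blast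

lemma key:
  fixes \<theta> g :: "real \<Rightarrow> real"
  assumes c1: "continuous_on {a..b} \<theta>" and c2: "continuous_on {a..b} g"
    and eq: "\<forall>x\<in>{a<..<b}. \<theta> x / 2 = (\<theta> x)^2 * (- g x + \<theta> x)"
    and z: "z \<in> {a..b}" "\<theta> z = 0" and x0: "x0 \<in> {a..b}" "\<theta> x0 \<noteq> 0"
  shows False
proof -
  have "compact ((\<lambda>x. \<theta> x - g x) ` {a..b})"
    by (intro compact_continuous_image continuous_intros c1 c2) simp
  then have "bounded ((\<lambda>x. \<theta> x - g x) ` {a..b})" by (rule compact_imp_bounded)
  then obtain M where M: "\<forall>x\<in>{a..b}. \<bar>\<theta> x - g x\<bar> \<le> M"
    unfolding bounded_iff by auto
  have M0: "M \<ge> 0" using M x0 by force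
  define c where "c = 1 / (2 * (M + 1))"
  have c0: "c > 0" using M0 by (simp add: c_def)
  have low: "\<bar>\<theta> x\<bar> \<ge> c" if "x \<in> {a<..<b}" "\<theta> x \<noteq> 0" for x
  proof -
    have e: "\<theta> x / 2 = (\<theta> x)^2 * (- g x + \<theta> x)" using eq that by auto
    have "\<theta> x * (1 - 2 * \<theta> x * (\<theta> x - g x)) = 0" using e by (simp add: algebra_simps power2_eq_square)
    hence "1 = 2 * \<theta> x * (\<theta> x - g x)" using that by simp
    hence "\<theta> x - g x = 1 / (2 * \<theta> x)" using that by (simp add: field_simps)
    moreover have "\<bar>\<theta> x - g x\<bar> \<le> M" using M that by auto
    ultimately have "\<bar>1 / (2 * \<theta> x)\<bar> \<le> M + 1" by simp
    hence "1 \<le> (M + 1) * (2 * \<bar>\<theta> x\<bar>)" using that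
      by (simp add: abs_mult divide_le_eq)
    thus ?thesis using M0 by (simp add: c_def field_simps)
  qed
  define p where "p = min x0 z"
  define q where "q = max x0 z"
  have conn: "connected (\<theta> ` {p..q})"
    by (intro connected_continuous_image continuous_on_subset[OF c1])
       (use z x0 in \<open>auto simp: p_def q_def\<close>)
  have i0: "0 \<in> \<theta> ` {p..q}" using z by (auto simp: p_def q_def intro!: image_eqI[of _ _ z])
  have i1: "\<theta> x0 \<in> \<theta> ` {p..q}" by (auto simp: p_def q_def)
  define v where "v = sgn (\<theta> x0) * min \<bar>\<theta> x0\<bar> c / 2"
  have "v \<in> \<theta> ` {p..q}"
  proof (cases "\<theta> x0 > 0")
    case True
    show ?thesis
      by (rule connectedD_interval[OF conn i0 i1]) (use True c0 in \<open>auto simp: v_def\<close>)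
  next
    case False
    hence "\<theta> x0 < 0" using x0 by simp
    thus ?thesis
      by (intro connectedD_interval[OF conn i1 i0]) (use c0 in \<open>auto simp: v_def\<close>)
  qed
  then obtain y where y: "y \<in> {p..q}" "\<theta> y = v" by auto
  have v0: "v \<noteq> 0" "\<bar>v\<bar> < c" "\<bar>v\<bar> < \<bar>\<theta> x0\<bar>" using x0 c0
    by (auto simp: v_def abs_mult sgn_if)
  have "y \<noteq> z" "y \<noteq> x0" using y v0 z by auto
  hence "y \<in> {a<..<b}" using y z x0 by (auto simp: p_def q_def)
  with low[of y] y v0 show False by auto
qed

lemma grow:
  fixes D3 D4 :: "real \<Rightarrow> real"
  assumes d: "\<forall>x. (D3 has_real_derivative D4 x) (at x)"
    and ev: "eventually (\<lambda>x. D4 x \<le> -1) at_top"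
    and B: "\<forall>x. \<bar>D3 x\<bar> \<le> B"
  shows False
proof -
  obtain X where X: "\<forall>x\<ge>X. D4 x \<le> -1" using ev by (auto simp: eventually_at_top_linorder)
  define x where "x = X + 2 * B + 1"
  have B0: "B \<ge> 0" using B[rule_format, of 0] by simp
  have "(\<lambda>t. D3 t + t) x \<le> (\<lambda>t. D3 t + t) X"
  proof (rule DERIV_nonpos_imp_nonincreasing[where f="\<lambda>t. D3 t + t"])
    show "X \<le> x" using B0 by (simp add: x_def)
    fix t assume "X \<le> t" "t \<le> x"
    thus "\<exists>y. ((\<lambda>t. D3 t + t) has_real_derivative y) (at t) \<and> y \<le> 0"
      using X d by (intro exI[of _ "D4 t + 1"]) (auto intro!: derivative_eq_intros)
  qed
  hence "D3 x \<le> D3 X - (2 * B + 1)" by (simp add: x_def)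
  thus False using B[rule_format, of x] B[rule_format, of X] by linarith
qed

theorem proposition2p1:
  fixes L :: real
  assumes "L > 0"
  shows "\<not> (\<exists>\<theta> d. C4_derivs {-L..L} \<theta> d
              \<and> (\<exists>x\<in>{-L..L}. \<theta> x \<noteq> 0)
              \<and> (\<forall>x\<in>{-L<..<L}. \<theta> x / 2 = (\<theta> x)^2 * (- d 4 x + \<theta> x))
              \<and> \<theta> (-L) = 0 \<and> \<theta> L = 0 \<and> d 1 (-L) = 0 \<and> d 1 L = 0)
       \<and> \<not> (\<exists>\<theta> d. C4_derivs UNIV \<theta> d
              \<and> (\<exists>x. \<theta> x \<noteq> 0)
              \<and> (\<forall>k<4. bounded (range (d k)))
              \<and> (\<forall>x. \<theta> x / 2 = (\<theta> x)^2 * (- d 4 x + \<theta> x))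
              \<and> (\<theta> \<longlongrightarrow> 0) at_top \<and> (\<theta> \<longlongrightarrow> 0) at_bot)"
proof (intro conjI notI)
  assume "\<exists>\<theta> d. C4_derivs {-L..L} \<theta> d
              \<and> (\<exists>x\<in>{-L..L}. \<theta> x \<noteq> 0)
              \<and> (\<forall>x\<in>{-L<..<L}. \<theta> x / 2 = (\<theta> x)^2 * (- d 4 x + \<theta> x))
              \<and> \<theta> (-L) = 0 \<and> \<theta> L = 0 \<and> d 1 (-L) = 0 \<and> d 1 L = 0"
  then obtain \<theta> d x0 where C: "C4_derivs {-L..L} \<theta> d" and x0: "x0 \<in> {-L..L}" "\<theta> x0 \<noteq> 0"
    and eq: "\<forall>x\<in>{-L<..<L}. \<theta> x / 2 = (\<theta> x)^2 * (- d 4 x + \<theta> x)" and z: "\<theta> L = 0"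
    by blast
  have "continuous_on {-L..L} \<theta>"
    using C unfolding C4_derivs_def by (metis deriv_cont zero_less_numeral)
  moreover have "continuous_on {-L..L} (d 4)" using C by (simp add: C4_derivs_def)
  ultimately show False
    using key[OF _ _ eq, of L x0] z x0 assms by auto
next
  assume "\<exists>\<theta> d. C4_derivs UNIV \<theta> d
              \<and> (\<exists>x. \<theta> x \<noteq> 0)
              \<and> (\<forall>k<4. bounded (range (d k)))
              \<and> (\<forall>x. \<theta> x / 2 = (\<theta> x)^2 * (- d 4 x + \<theta> x))
              \<and> (\<theta> \<longlongrightarrow> 0) at_top \<and> (\<theta> \<longlongrightarrow> 0) at_bot"
  then obtain \<theta> d x0 where C: "C4_derivs UNIV \<theta> d" and x0: "\<theta> x0 \<noteq> 0"
    and bd: "\<forall>k<4. bounded (range (d k))"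
    and eq: "\<forall>x. \<theta> x / 2 = (\<theta> x)^2 * (- d 4 x + \<theta> x)" and lim: "(\<theta> \<longlongrightarrow> 0) at_top"
    by blast
  have cth: "continuous_on UNIV \<theta>"
    using C unfolding C4_derivs_def by (metis deriv_cont zero_less_numeral)
  have c4: "continuous_on UNIV (d 4)" using C by (simp add: C4_derivs_def)
  have d3: "\<forall>x. (d 3 has_real_derivative d 4 x) (at x)"
  proof -
    have h: "\<forall>k<4. \<forall>x. (d k has_real_derivative d (Suc k) x) (at x)" using C by (simp add: C4_derivs_def)
    show ?thesis using h[rule_format, of 3] by (simp add: eval_nat_numeral)
  qed
  obtain B where B: "\<forall>x. \<bar>d 3 x\<bar> \<le> B"
    using bd[rule_format, of 3] unfolding bounded_iff by auto
  have nz: "\<theta> x \<noteq> 0" for x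
  proof
    assume z: "\<theta> x = 0"
    have "continuous_on {min x x0..max x x0} \<theta>" "continuous_on {min x x0..max x x0} (d 4)"
      using cth c4 by (auto intro: continuous_on_subset)
    thus False using key[of "min x x0" "max x x0" \<theta> "d 4" x x0] eq z x0 by auto
  qed
  have sgn: "(\<forall>x. \<theta> x > 0) \<or> (\<forall>x. \<theta> x < 0)"
  proof (rule ccontr)
    assume "\<not> ?thesis"
    then obtain p q where "\<theta> p \<le> 0" "\<theta> q \<ge> 0" by (meson not_less)
    hence "\<theta> p < 0" "\<theta> q > 0" using nz by (auto simp: order_le_less)
    have conn: "connected (\<theta> ` {min p q..max p q})"
      by (intro connected_continuous_image continuous_on_subset[OF cth]) auto
    have "0 \<in> \<theta> ` {min p q..max p q}"
      by (rule connectedD_interval[OF conn, of "\<theta> p" "\<theta> q"])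
         (use \<open>\<theta> p < 0\<close> \<open>\<theta> q > 0\<close> in auto)
    thus False using nz by auto
  qed
  have d4eq: "\<theta> x - d 4 x = 1 / (2 * \<theta> x)" for x
  proof -
    have "\<theta> x * (1 - 2 * \<theta> x * (\<theta> x - d 4 x)) = 0" using eq[rule_format, of x]
      by (simp add: algebra_simps power2_eq_square)
    hence "1 = 2 * \<theta> x * (\<theta> x - d 4 x)" using nz[of x] by simp
    thus ?thesis using nz[of x] by (simp add: field_simps)
  qed
  show False
    using sgn
  proof
    assume pos: "\<forall>x. \<theta> x > 0"
    have "eventually (\<lambda>x. \<theta> x < 1/4) at_top" using lim by (rule order_tendstoD) simp
    hence "eventually (\<lambda>x. d 4 x \<le> -1) at_top"
    proof (rule eventually_mono)
      fix x assume "\<theta> x < 1/4"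
      moreover have "\<theta> x > 0" using pos by auto
      ultimately have "1 / (2 * \<theta> x) > 2" by (simp add: field_simps)
      thus "d 4 x \<le> -1" using d4eq[of x] \<open>\<theta> x < 1/4\<close> by linarith
    qed
    thus False using grow[OF d3 _ B] by blast
  next
    assume neg: "\<forall>x. \<theta> x < 0"
    have "eventually (\<lambda>x. \<theta> x > -1/4) at_top" using lim by (rule order_tendstoD) simp
    hence "eventually (\<lambda>x. - d 4 x \<le> -1) at_top"
    proof (rule eventually_mono)
      fix x assume "\<theta> x > -1/4"
      moreover have "\<theta> x < 0" using neg by auto
      ultimately have "1 / (2 * \<theta> x) < -2" by (simp add: field_simps)
      thus "- d 4 x \<le> -1" using d4eq[of x] \<open>\<theta> x > -1/4\<close> by linarith
    qed
    moreover have "\<forall>x. ((\<lambda>x. - d 3 x) has_real_derivative - d 4 x) (at x)"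
      using d3 by (auto intro!: derivative_eq_intros)
    moreover have "\<forall>x. \<bar>- d 3 x\<bar> \<le> B" using B by simp
    ultimately show False using grow[of "\<lambda>x. - d 3 x" "\<lambda>x. - d 4 x" B] by blast
  qed
qed

end
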